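(* Let $S_n=(E_{n-m},K_m)$ be a split graph in which the neighbourhoods of all vertices in $E_{n-m}$ are pairwise distinct. If some vertex $v$ of $K_m$ is adjacent to at least $d+1$ vertices of $E_{n-m}$ that have degree $d$, where $d\leq m-2$, then $S_n$ is not word-representable.
   Context: A graph $G=(V,E)$ is word-representable if there exists a word $w$ over the alphabet $V$ such that for all distinct $x,y\in V$, the letters $x$ and $y$ alternate in $w$ if and only if $xy\in E$ (alternation meaning that deleting all letters other than $x$ and $y$ leaves $xyxy\cdots$ or $yxyx\cdots$). The notation $S_n=(E_{n-m},K_m)$ denotes a split graph on $n$ vertices whose vertex set is partitioned into a maximal clique $K_m$ on $m$ vertices and an independent set $E_{n-m}$ on $n-m$ vertices. *)

theory Defs
  imports Main
begin

definition simple_graph :: "'a set \<Rightarrow> ('a \<Rightarrow> 'a \<Rightarrow> bool) \<Rightarrow> bool" where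
  "simple_graph V E \<longleftrightarrow> finite V \<and> (\<forall>x y. E x y \<longrightarrow> E y x) \<and> (\<forall>x. \<not> E x x)
     \<and> (\<forall>x y. E x y \<longrightarrow> x \<in> V \<and> y \<in> V)"

definition nbhd :: "'a set \<Rightarrow> ('a \<Rightarrow> 'a \<Rightarrow> bool) \<Rightarrow> 'a \<Rightarrow> 'a set" where
  "nbhd V E x = {y \<in> V. E x y}"

definition degree :: "'a set \<Rightarrow> ('a \<Rightarrow> 'a \<Rightarrow> bool) \<Rightarrow> 'a \<Rightarrow> nat" where
  "degree V E x = card (nbhd V E x)"

definition alternate :: "'a list \<Rightarrow> 'a \<Rightarrow> 'a \<Rightarrow> bool" where
  "alternate w x y \<longleftrightarrow>
     (let u = filter (\<lambda>z. z = x \<or> z = y) w in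
      \<forall>i. Suc i < length u \<longrightarrow> u ! i \<noteq> u ! Suc i)"

definition word_representable :: "'a set \<Rightarrow> ('a \<Rightarrow> 'a \<Rightarrow> bool) \<Rightarrow> bool" where
  "word_representable V E \<longleftrightarrow>
     (\<exists>w. set w = V \<and> (\<forall>x\<in>V. \<forall>y\<in>V. x \<noteq> y \<longrightarrow> (alternate w x y \<longleftrightarrow> E x y)))"

text \<open>Split graph with partition V = K \<union> I, K a maximal clique, I an independent set.\<close>
definition split_partition :: "'a set \<Rightarrow> ('a \<Rightarrow> 'a \<Rightarrow> bool) \<Rightarrow> 'a set \<Rightarrow> 'a set \<Rightarrow> bool" where
  "split_partition V E I K \<longleftrightarrow>
     V = I \<union> K \<and> I \<inter> K = {} \<and>
     (\<forall>x\<in>K. \<forall>y\<in>K. x \<noteq> y \<longrightarrow> E x y) \<and>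
     (\<forall>x\<in>I. \<forall>y\<in>I. \<not> E x y) \<and>
     (\<forall>x\<in>I. \<exists>y\<in>K. \<not> E x y)"

end

theory Submission
  imports Defs
begin


definition Dv :: "'a \<Rightarrow> 'a \<Rightarrow> 'a list \<Rightarrow> int" where
  "Dv a b xs = int (count_list xs a) - int (count_list xs b)"

lemma alt_list_band:
  assumes "a \<noteq> b" "\<forall>i. Suc i < length u \<longrightarrow> u!i \<noteq> u!Suc i" "set u \<subseteq> {a,b}"
  shows "\<forall>j \<le> length u. Dv a b (take j u) \<in> (if u = [] then {0} else if hd u = a then {0,1} else {-1,0})"
  using assms
proof (induction u)
  case Nil
  then show ?case by (simp add: Dv_def)
next
  case (Cons c u)
  have alt: "\<forall>i. Suc i < length u \<longrightarrow> u!i \<noteq> u!Suc i"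
  proof (intro allI impI)
    fix i assume "Suc i < length u"
    then show "u!i \<noteq> u!Suc i" using Cons.prems(2)[rule_format, of "Suc i"] by simp
  qed
  have hd: "u \<noteq> [] \<Longrightarrow> hd u \<noteq> c" using Cons.prems(2)[rule_format, of 0] by (cases u) auto
  have hdin: "u \<noteq> [] \<Longrightarrow> hd u \<in> {a,b}" using Cons.prems(3) by (cases u) auto
  have IH: "\<forall>j \<le> length u. Dv a b (take j u) \<in> (if u = [] then {0} else if hd u = a then {0,1} else {-1,0})"
    using Cons.IH[OF Cons.prems(1) alt] Cons.prems(3) by simp
  show ?case
  proof (intro allI impI)
    fix j assume j: "j \<le> length (c # u)"
    show "Dv a b (take j (c # u)) \<in> (if c # u = [] then {0} else if hd (c # u) = a then {0, 1} else {- 1, 0})"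
    proof (cases j)
      case 0 then show ?thesis by (simp add: Dv_def)
    next
      case (Suc j')
      have j': "j' \<le> length u" using j Suc by simp
      have e: "Dv a b (take j (c # u)) = Dv a b [c] + Dv a b (take j' u)"
        using Suc by (simp add: Dv_def)
      have "c = a \<or> c = b" using Cons.prems(3) by auto
      then show ?thesis
      proof
        assume ca: "c = a"
        have "Dv a b (take j' u) \<in> {-1, 0}"
          using IH j' hd hdin ca assms(1) by (auto split: if_splits simp: Dv_def)
        then show ?thesis using e ca assms(1) by (auto simp: Dv_def)
      next
        assume cb: "c = b"
        have "Dv a b (take j' u) \<in> {0, 1}"
          using IH j' hd hdin cb assms(1) by (auto split: if_splits simp: Dv_def)
        then show ?thesis using e cb assms(1) by (auto simp: Dv_def)
      qed
    qed
  qed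
qed

lemma alt_list_band2:
  assumes "a \<noteq> b" "\<forall>i. Suc i < length u \<longrightarrow> u!i \<noteq> u!Suc i" "set u \<subseteq> {a,b}"
    "j1 \<le> length u" "j2 \<le> length u"
  shows "\<bar>Dv a b (take j1 u) - Dv a b (take j2 u)\<bar> \<le> 1"
proof -
  have H: "\<forall>j \<le> length u. Dv a b (take j u) \<in> (if u = [] then {0} else if hd u = a then {0,1} else {-1,0})"
    by (rule alt_list_band[OF assms(1-3)])
  have h1: "Dv a b (take j1 u) \<in> (if u = [] then {0} else if hd u = a then {0,1} else {-1,0})"
    using H assms(4) by blast
  have h2: "Dv a b (take j2 u) \<in> (if u = [] then {0} else if hd u = a then {0,1} else {-1,0})"
    using H assms(5) by blast
  show ?thesis
  proof (cases "u = []")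
    case True then show ?thesis using h1 h2 by simp
  next
    case False
    show ?thesis
    proof (cases "hd u = a")
      case True then show ?thesis using h1 h2 False by auto
    next
      case F2: False then show ?thesis using h1 h2 False by auto
    qed
  qed
qed

lemma band_list_alt:
  assumes "a \<noteq> b" "set u \<subseteq> {a,b}"
    "\<forall>j1 \<le> length u. \<forall>j2 \<le> length u. \<bar>Dv a b (take j1 u) - Dv a b (take j2 u)\<bar> \<le> 1"
  shows "\<forall>i. Suc i < length u \<longrightarrow> u!i \<noteq> u!Suc i"
proof (intro allI impI notI)
  fix i assume i: "Suc i < length u" and eq: "u!i = u!Suc i"
  have t: "take (Suc (Suc i)) u = take i u @ [u!i, u!Suc i]"
    using i by (simp add: take_Suc_conv_app_nth)
  have "u!i \<in> {a,b}" using assms(2) i by (meson nth_mem subsetD Suc_lessD)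
  then have "\<bar>Dv a b (take (Suc (Suc i)) u) - Dv a b (take i u)\<bar> = 2"
    using t eq assms(1) by (auto simp: Dv_def)
  moreover have "\<bar>Dv a b (take (Suc (Suc i)) u) - Dv a b (take i u)\<bar> \<le> 1"
    using assms(3) i by simp
  ultimately show False by simp
qed

lemma count_list_filter: "P a \<Longrightarrow> count_list (filter P xs) a = count_list xs a"
  by (induction xs) auto

lemma filter_take_ex:
  "j \<le> length (filter P w) \<Longrightarrow> \<exists>t\<le>length w. filter P (take t w) = take j (filter P w)"
proof (induction w arbitrary: j)
  case Nil then show ?case by simp
next
  case (Cons c w)
  show ?case
  proof (cases "P c")
    case True
    show ?thesis
    proof (cases j)
      case 0 then show ?thesis by (intro exI[of _ 0]) simp
    next
      case (Suc j')
      then obtain t where "t \<le> length w" "filter P (take t w) = take j' (filter P w)"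
        using Cons True by auto
      then show ?thesis using True Suc by (intro exI[of _ "Suc t"]) simp
    qed
  next
    case False
    then obtain t where "t \<le> length w" "filter P (take t w) = take j (filter P w)"
      using Cons by auto
    then show ?thesis using False by (intro exI[of _ "Suc t"]) simp
  qed
qed

lemma filter_take_is:
  "filter P (take t w) = take (length (filter P (take t w))) (filter P w)"
proof -
  have "filter P w = filter P (take t w) @ filter P (drop t w)"
    by (metis append_take_drop_id filter_append)
  then show ?thesis by (metis append_eq_conv_conj)
qed

lemma alt_band:
  assumes "a \<noteq> b"
  shows "alternate w a b \<longleftrightarrow>
    (\<forall>t1\<le>length w. \<forall>t2\<le>length w. \<bar>Dv a b (take t1 w) - Dv a b (take t2 w)\<bar> \<le> 1)"
proof -
  define Q where "Q = (\<lambda>z. z = a \<or> z = b)"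
  define u where "u = filter Q w"
  have su: "set u \<subseteq> {a,b}" unfolding u_def Q_def by auto
  have DQ: "Dv a b (filter Q xs) = Dv a b xs" for xs
    unfolding Dv_def by (simp add: count_list_filter Q_def)
  have altu: "alternate w a b \<longleftrightarrow> (\<forall>i. Suc i < length u \<longrightarrow> u!i \<noteq> u!Suc i)"
    unfolding alternate_def u_def Q_def Let_def by simp
  have fw: "Dv a b (take t w) = Dv a b (take (length (filter Q (take t w))) u)" for t
    using filter_take_is[of Q t w] DQ[of "take t w"] unfolding u_def by metis
  have lenle: "length (filter Q (take t w)) \<le> length u" for t
  proof -
    have "filter Q w = filter Q (take t w) @ filter Q (drop t w)"
      by (metis append_take_drop_id filter_append)
    then have "length u = length (filter Q (take t w)) + length (filter Q (drop t w))"
      unfolding u_def by (metis length_append)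
    then show ?thesis by simp
  qed
  show ?thesis
  proof
    assume "alternate w a b"
    then have al: "\<forall>i. Suc i < length u \<longrightarrow> u!i \<noteq> u!Suc i" using altu by simp
    show "\<forall>t1\<le>length w. \<forall>t2\<le>length w. \<bar>Dv a b (take t1 w) - Dv a b (take t2 w)\<bar> \<le> 1"
    proof (intro allI impI)
      fix t1 t2 assume "t1 \<le> length w" "t2 \<le> length w"
      show "\<bar>Dv a b (take t1 w) - Dv a b (take t2 w)\<bar> \<le> 1"
        unfolding fw[of t1] fw[of t2] by (rule alt_list_band2[OF assms al su lenle lenle])
    qed
  next
    assume H: "\<forall>t1\<le>length w. \<forall>t2\<le>length w. \<bar>Dv a b (take t1 w) - Dv a b (take t2 w)\<bar> \<le> 1"
    have "\<forall>j1 \<le> length u. \<forall>j2 \<le> length u. \<bar>Dv a b (take j1 u) - Dv a b (take j2 u)\<bar> \<le> 1"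
    proof (intro allI impI)
      fix j1 j2 assume "j1 \<le> length u" "j2 \<le> length u"
      then obtain t1 t2 where "t1 \<le> length w" "filter Q (take t1 w) = take j1 u"
        "t2 \<le> length w" "filter Q (take t2 w) = take j2 u"
        using filter_take_ex unfolding u_def by metis
      then show "\<bar>Dv a b (take j1 u) - Dv a b (take j2 u)\<bar> \<le> 1" using H[rule_format, of t1 t2] DQ[of "take t1 w"] DQ[of "take t2 w"] by simp
    qed
    then show "alternate w a b" using band_list_alt[OF assms su] altu by simp
  qed
qed




lemma take_split_count:
  assumes "i \<le> j"
  shows "count_list (take j z) c = count_list (take i z) c + count_list (take (j - i) (drop i z)) c"
proof -
  have "take j z = take i z @ take (j - i) (drop i z)"
    using assms by (metis le_add_diff_inverse take_add)
  then show ?thesis by simp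
qed

lemma count_take_Suc:
  "n < length z \<Longrightarrow> count_list (take (Suc n) z) c = count_list (take n z) c + (if z!n = c then 1 else 0)"
  by (simp add: take_Suc_conv_app_nth)

locale cliqueword =
  fixes z :: "'a list" and K :: "'a set" and m :: nat
  assumes fin: "finite K" and cardK: "card K = m" and setz: "set z = K"
    and alt: "\<And>a b. a \<in> K \<Longrightarrow> b \<in> K \<Longrightarrow> a \<noteq> b \<Longrightarrow> alternate z a b"
begin

lemma mpos: "i < length z \<Longrightarrow> 0 < m"
proof -
  assume "i < length z"
  then have "z!i \<in> K" using setz by auto
  then show "0 < m" using cardK fin card_gt_0_iff by blast
qed

lemma band:
  assumes "a \<in> K" "b \<in> K" "a \<noteq> b" "t1 \<le> length z" "t2 \<le> length z"
  shows "\<bar>Dv a b (take t1 z) - Dv a b (take t2 z)\<bar> \<le> 1"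
  using alt[OF assms(1-3)] alt_band[OF assms(3), of z] assms(4,5) by blast

lemma claimA:
  assumes ij: "i < j" "j < length z" and a: "z!i = a" "z!j = a"
    and none: "\<forall>k. i < k \<and> k < j \<longrightarrow> z!k \<noteq> a"
  shows "j - i = m"
proof -
  define s where "s = take (j - Suc i) (drop (Suc i) z)"
  have aK: "a \<in> K" using a ij setz by auto
  have cj: "count_list (take j z) c = count_list (take (Suc i) z) c + count_list s c" for c
    unfolding s_def by (rule take_split_count) (use ij in simp)
  have cSj: "count_list (take (Suc j) z) c = count_list (take j z) c + (if a = c then 1 else 0)" for c
    using count_take_Suc[OF ij(2)] a by simp
  have cSi: "count_list (take (Suc i) z) c = count_list (take i z) c + (if a = c then 1 else 0)" for c
    using count_take_Suc[of i z] ij a by simp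
  have ss: "set s \<subseteq> K" unfolding s_def using setz by (metis in_set_dropD in_set_takeD subsetI)
  have sa: "count_list s a = 0"
  proof -
    have "a \<notin> set s"
    proof
      assume "a \<in> set s"
      then obtain k where k: "k < length s" "s!k = a" by (metis in_set_conv_nth)
      have "s!k = z!(Suc i + k)" using k(1) ij unfolding s_def by (simp add: nth_drop)
      moreover have "i < Suc i + k" "Suc i + k < j" using k(1) ij unfolding s_def by auto
      ultimately have "z!(Suc i + k) = a" using k(2) by simp
      moreover have "z!(Suc i + k) \<noteq> a" using none \<open>i < Suc i + k\<close> \<open>Suc i + k < j\<close> by blast
      ultimately show False by simp
    qed
    then show ?thesis by simp
  qed
  have sb: "count_list s b = 1" if bK: "b \<in> K" and ba: "b \<noteq> a" for b
  proof -
    have h1: "\<bar>Dv a b (take (Suc j) z) - Dv a b (take i z)\<bar> \<le> 1"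
      using band[OF aK bK ba[symmetric], of "Suc j" i] ij by simp
    have h2: "\<bar>Dv a b (take j z) - Dv a b (take (Suc i) z)\<bar> \<le> 1"
      using band[OF aK bK ba[symmetric], of j "Suc i"] ij by simp
    show ?thesis using h1 h2 cj[of a] cj[of b] cSj[of a] cSj[of b] cSi[of a] cSi[of b] sa ba
      unfolding Dv_def by auto
  qed
  have "length s = sum (count_list s) K" using sum_count_set[OF ss fin] by simp
  also have "\<dots> = sum (count_list s) (K - {a}) + count_list s a"
    using fin aK by (simp add: sum.remove add.commute)
  also have "\<dots> = sum (\<lambda>_. 1) (K - {a})" using sb sa by simp
  also have "\<dots> = m - 1" using cardK aK fin by simp
  finally have "length s = m - 1" .
  moreover have "length s = j - Suc i" unfolding s_def using ij by simp
  moreover have "m \<ge> 1" using cardK aK fin by (metis card_0_eq empty_iff less_one not_le)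
  ultimately show ?thesis using ij by arith
qed

lemma claimB:
  assumes i: "i < length z" and a: "z!i = a"
    and none: "\<forall>k. i < k \<and> k < length z \<longrightarrow> z!k \<noteq> a"
  shows "length z - Suc i \<le> m - 1"
proof -
  define s where "s = drop (Suc i) z"
  have aK: "a \<in> K" using a i setz by auto
  have cj: "count_list (take (length z) z) c = count_list (take (Suc i) z) c + count_list s c" for c
    unfolding s_def using take_split_count[of "Suc i" "length z" z c] i by simp
  have ss: "set s \<subseteq> K" unfolding s_def using setz by (metis in_set_dropD subsetI)
  have sa: "count_list s a = 0"
  proof -
    have "a \<notin> set s"
    proof
      assume "a \<in> set s"
      then obtain k where k: "k < length s" "s!k = a" by (metis in_set_conv_nth)
      have "s!k = z!(Suc i + k)" using k(1) unfolding s_def by (simp add: nth_drop)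
      moreover have "i < Suc i + k" "Suc i + k < length z" using k(1) i unfolding s_def by auto
      ultimately have "z!(Suc i + k) = a" using k(2) by simp
      moreover have "z!(Suc i + k) \<noteq> a" using none \<open>i < Suc i + k\<close> \<open>Suc i + k < length z\<close> by blast
      ultimately show False by simp
    qed
    then show ?thesis by simp
  qed
  have sb: "count_list s b \<le> 1" if bK: "b \<in> K" and ba: "b \<noteq> a" for b
  proof -
    have h2: "\<bar>Dv a b (take (length z) z) - Dv a b (take (Suc i) z)\<bar> \<le> 1"
      using band[OF aK bK ba[symmetric], of "length z" "Suc i"] i by simp
    show ?thesis using h2 cj[of a] cj[of b] sa ba unfolding Dv_def by auto
  qed
  have "length s = sum (count_list s) K" using sum_count_set[OF ss fin] by simp
  also have "\<dots> = sum (count_list s) (K - {a}) + count_list s a"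
    using fin aK by (simp add: sum.remove add.commute)
  also have "\<dots> \<le> sum (\<lambda>_. 1) (K - {a})"
  proof -
    have "sum (count_list s) (K - {a}) \<le> sum (\<lambda>_. 1) (K - {a})" by (rule sum_mono) (use sb in auto)
    then show ?thesis using sa by simp
  qed
  also have "\<dots> = m - 1" using cardK aK fin by simp
  finally show ?thesis unfolding s_def by simp
qed

lemma next_occ:
  assumes "i < j" "j < length z" "z!j = z!i"
  shows "j - i \<ge> m"
proof -
  define a where "a = z!i"
  define k where "k = (LEAST k. i < k \<and> k < length z \<and> z!k = a)"
  have ex: "i < j \<and> j < length z \<and> z!j = a" using assms a_def by simp
  have k: "i < k \<and> k < length z \<and> z!k = a" unfolding k_def by (rule LeastI[of _ j]) (rule ex)
  have kj: "k \<le> j" unfolding k_def by (rule Least_le) (rule ex)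
  have none: "\<forall>l. i < l \<and> l < k \<longrightarrow> z!l \<noteq> a"
  proof (intro allI impI)
    fix l assume l: "i < l \<and> l < k"
    show "z!l \<noteq> a"
    proof
      assume "z!l = a"
      then have "k \<le> l" unfolding k_def using l k by (intro Least_le) auto
      then show False using l by simp
    qed
  qed
  have "k - i = m" using claimA[of i k a] k none a_def by simp
  then show ?thesis using kj by simp
qed

lemma period:
  assumes "i + m < length z"
  shows "z!(i + m) = z!i"
proof -
  define a where "a = z!i"
  have "\<exists>k. i < k \<and> k < length z \<and> z!k = a"
  proof (rule ccontr)
    assume "\<not> ?thesis"
    then have nn: "\<forall>k. i < k \<and> k < length z \<longrightarrow> z!k \<noteq> a" by blast
    have "length z - Suc i \<le> m - 1" by (rule claimB[OF _ _ nn]) (use assms a_def in auto)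
    then show False using assms mpos[of i] by linarith
  qed
  then obtain j0 where j0: "i < j0 \<and> j0 < length z \<and> z!j0 = a" by blast
  define k where "k = (LEAST k. i < k \<and> k < length z \<and> z!k = a)"
  have k: "i < k \<and> k < length z \<and> z!k = a" unfolding k_def by (rule LeastI[of _ j0]) (rule j0)
  have none: "\<forall>l. i < l \<and> l < k \<longrightarrow> z!l \<noteq> a"
  proof (intro allI impI)
    fix l assume l: "i < l \<and> l < k"
    show "z!l \<noteq> a"
    proof
      assume "z!l = a"
      then have "k \<le> l" unfolding k_def using l k by (intro Least_le) auto
      then show False using l by simp
    qed
  qed
  have "k - i = m" using claimA[of i k a] k none a_def by simp
  then have "k = i + m" using k by arith
  then show ?thesis using k a_def by simp
qed

lemma len: "m \<le> length z"
  using cardK setz card_length by blast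

lemma periodic: "i < length z \<Longrightarrow> z!i = z!(i mod m)"
proof (induction i rule: less_induct)
  case (less i)
  show ?case
  proof (cases "i < m")
    case True then show ?thesis by simp
  next
    case False
    then have "(i - m) + m < length z" using less.prems by simp
    then have "z!i = z!(i - m)" using period[of "i - m"] False by simp
    also have "\<dots> = z!((i - m) mod m)"
    proof -
      have m0: "0 < m" using mpos less.prems by auto
      have "i - m < i" using m0 False by simp
      moreover have "i - m < length z" using less.prems by simp
      ultimately show ?thesis using less.IH by blast
    qed
    also have "(i - m) mod m = i mod m" using False by (simp add: le_mod_geq)
    finally show ?thesis .
  qed
qed

definition P where "P = take m z"

lemma P_len: "length P = m" unfolding P_def using len by simp

lemma P_distinct: "distinct P"
  unfolding P_def distinct_conv_nth
proof (intro allI impI)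
  fix i j assume i: "i < length (take m z)" and j: "j < length (take m z)" and ij: "i \<noteq> j"
  have im: "i < m" "j < m" using i j by auto
  show "take m z ! i \<noteq> take m z ! j"
  proof
    assume eq: "take m z ! i = take m z ! j"
    then have eq': "z!i = z!j" using im by simp
    show False
    proof (cases "i < j")
      case True
      then show False using next_occ[of i j] eq' im len by simp
    next
      case False
      then have "j < i" using ij by simp
      then show False using next_occ[of j i] eq' im len by simp
    qed
  qed
qed

lemma P_set: "set P = K"
proof -
  have "set P \<subseteq> K" unfolding P_def using setz by (metis in_set_takeD subsetI)
  moreover have "card (set P) = m" using P_distinct P_len distinct_card by metis
  ultimately show ?thesis using card_subset_eq[OF fin] cardK by metis
qed

lemma z_P: "i < length z \<Longrightarrow> z!i = P!(i mod m)"
proof -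
  assume i: "i < length z"
  have m0: "0 < m" using mpos i by auto
  have "i mod m < m" using m0 by simp
  then show ?thesis using periodic[OF i] unfolding P_def by simp
qed

end



lemma step_div:
  assumes "(\<phi>::nat) < m"
  shows "(Suc n + m - 1 - \<phi>) div m = (n + m - 1 - \<phi>) div m + (if n mod m = \<phi> then 1 else 0)"
proof -
  define y where "y = n + m - 1 - \<phi>"
  have sy: "Suc n + m - 1 - \<phi> = Suc y" unfolding y_def using assms by simp
  have "Suc y mod m = 0 \<longleftrightarrow> int m dvd int (Suc y)" by (metis dvd_eq_mod_eq_0 int_dvd_int_iff)
  also have "int (Suc y) = (int n - int \<phi>) + int m" unfolding y_def using assms by simp
  also have "int m dvd ((int n - int \<phi>) + int m) \<longleftrightarrow> int m dvd (int n - int \<phi>)" by (simp add: dvd_add_left_iff)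
  also have "\<dots> \<longleftrightarrow> int n mod int m = int \<phi> mod int m" by (simp add: mod_eq_dvd_iff)
  also have "\<dots> \<longleftrightarrow> n mod m = \<phi>" using assms by (metis mod_less of_nat_eq_iff zmod_int)
  finally have e: "Suc y mod m = 0 \<longleftrightarrow> n mod m = \<phi>" .
  show ?thesis unfolding sy using e div_Suc[of y m] y_def by auto
qed

lemma div_band:
  assumes "(m::int) > 0" "\<Delta> \<ge> 0"
  shows "(y + \<Delta>) div m - y div m \<le> 1 \<longleftrightarrow> y mod m + \<Delta> < 2*m"
proof -
  define t where "t = y mod m"
  have y: "y = t + m * (y div m)" unfolding t_def by simp
  have "(y + \<Delta>) div m = (t + \<Delta>) div m + y div m"
    by (subst y) (use assms(1) in \<open>simp add: add.assoc[symmetric] add.commute\<close>)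
  then have e: "(y + \<Delta>) div m - y div m = (t + \<Delta>) div m" by simp
  have t0: "t \<ge> 0" unfolding t_def using assms by simp
  have b1: "m * ((t + \<Delta>) div m) \<le> t + \<Delta>" using assms(1)
    by (metis add.commute div_mult_mod_eq le_add_same_cancel2 pos_mod_sign mult.commute)
  have b2: "t + \<Delta> < m * ((t + \<Delta>) div m) + m" using assms(1)
    by (metis add.commute add_less_cancel_left div_mult_mod_eq pos_mod_bound mult.commute)
  show ?thesis unfolding e t_def[symmetric]
  proof
    assume "(t + \<Delta>) div m \<le> 1"
    then have "m * ((t + \<Delta>) div m) \<le> m * 1" using assms(1) by (simp add: mult_left_mono)
    then show "t + \<Delta> < 2 * m" using b2 by linarith
  next
    assume h: "t + \<Delta> < 2 * m"
    show "(t + \<Delta>) div m \<le> 1"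
    proof (rule ccontr)
      assume "\<not> (t + \<Delta>) div m \<le> 1"
      then have "(t + \<Delta>) div m \<ge> 2" by simp
      then have "m * ((t + \<Delta>) div m) \<ge> m * 2" using assms(1) by (simp add: mult_left_mono)
      then show False using b1 h by linarith
    qed
  qed
qed

context cliqueword begin

lemma count_z:
  assumes "\<phi> < m"
  shows "n \<le> length z \<Longrightarrow> count_list (take n z) (z!\<phi>) = (n + m - 1 - \<phi>) div m"
proof (induction n)
  case 0
  then show ?case using assms by simp
next
  case (Suc n)
  have n: "n < length z" using Suc.prems by simp
  have phz: "\<phi> < length z" using assms len by simp
  have "z!n = z!\<phi> \<longleftrightarrow> n mod m = \<phi>"
  proof -
    have "z!n = P!(n mod m)" using z_P[OF n] .
    moreover have "z!\<phi> = P!\<phi>" using z_P[OF phz] assms by simp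
    moreover have "n mod m < length P" using P_len assms by simp
    moreover have "\<phi> < length P" using P_len assms by simp
    ultimately show ?thesis using P_distinct by (simp add: nth_eq_iff_index_eq)
  qed
  then show ?case using count_take_Suc[OF n, of "z!\<phi>"] Suc.IH n step_div[OF assms, of n] by simp
qed

end

lemma card_mod_set:
  assumes m: "(m::nat) > 0"
  shows "card {\<phi> \<in> {0..<m}. (A - int \<phi>) mod int m < l} = card {t \<in> {0..<m}. int t < l}"
proof -
  define g where "g = (\<lambda>\<phi>::nat. nat ((A - int \<phi>) mod int m))"
  have bij: "bij_betw g {\<phi> \<in> {0..<m}. (A - int \<phi>) mod int m < l} {t \<in> {0..<m}. int t < l}"
  proof (rule bij_betw_byWitness[where f' = g])
    show "\<forall>a\<in>{\<phi> \<in> {0..<m}. (A - int \<phi>) mod int m < l}. g (g a) = a"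
    proof
      fix a assume "a \<in> {\<phi> \<in> {0..<m}. (A - int \<phi>) mod int m < l}"
      then have a: "a < m" by simp
      have "int (g a) = (A - int a) mod int m" unfolding g_def using m by simp
      then have "(A - int (g a)) mod int m = (A - (A - int a)) mod int m"
        by (simp add: mod_diff_right_eq)
      also have "\<dots> = int a" using a by simp
      finally show "g (g a) = a" unfolding g_def by simp
    qed
    show "\<forall>a\<in>{t \<in> {0..<m}. int t < l}. g (g a) = a"
    proof
      fix a assume "a \<in> {t \<in> {0..<m}. int t < l}"
      then have a: "a < m" by simp
      have "int (g a) = (A - int a) mod int m" unfolding g_def using m by simp
      then have "(A - int (g a)) mod int m = (A - (A - int a)) mod int m"
        by (simp add: mod_diff_right_eq)
      also have "\<dots> = int a" using a by simp
      finally show "g (g a) = a" unfolding g_def by simp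
    qed
    show "g ` {\<phi> \<in> {0..<m}. (A - int \<phi>) mod int m < l} \<subseteq> {t \<in> {0..<m}. int t < l}"
    proof
      fix t assume "t \<in> g ` {\<phi> \<in> {0..<m}. (A - int \<phi>) mod int m < l}"
      then obtain a where a: "a < m" "(A - int a) mod int m < l" "t = g a" by auto
      have "int t = (A - int a) mod int m" unfolding a(3) g_def using m by simp
      moreover have "(A - int a) mod int m < int m" using m by simp
      ultimately show "t \<in> {t \<in> {0..<m}. int t < l}" using a(2) by auto
    qed
    show "g ` {t \<in> {0..<m}. int t < l} \<subseteq> {\<phi> \<in> {0..<m}. (A - int \<phi>) mod int m < l}"
    proof
      fix t assume "t \<in> g ` {t \<in> {0..<m}. int t < l}"
      then obtain a where a: "a < m" "int a < l" "t = g a" by auto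
      have it: "int t = (A - int a) mod int m" unfolding a(3) g_def using m by simp
      then have "(A - int t) mod int m = (A - (A - int a)) mod int m"
        by (simp add: mod_diff_right_eq)
      also have "\<dots> = int a" using a by simp
      finally have "(A - int t) mod int m < l" using a(2) by simp
      moreover have "(A - int a) mod int m < int m" using m by simp
      ultimately show "t \<in> {\<phi> \<in> {0..<m}. (A - int \<phi>) mod int m < l}" using it by auto
    qed
  qed
  then show ?thesis by (rule bij_betw_same_card)
qed

lemma charN:
  assumes cw: "cliqueword (filter (\<lambda>c. c \<in> K) w) K m"
    and xK: "x \<notin> K" and ph: "\<phi> < m"
  defines "z \<equiv> filter (\<lambda>c. c \<in> K) w"
    and "H \<equiv> \<lambda>t. int (length (filter (\<lambda>c. c \<in> K) (take t w))) - int m * int (count_list (take t w) x)"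
  defines "hmin \<equiv> Min (H ` {0..length w})" and "hmax \<equiv> Max (H ` {0..length w})"
  shows "alternate w x (z ! \<phi>) \<longleftrightarrow> (hmin + int m - 1 - int \<phi>) mod int m < 2 * int m - (hmax - hmin)"
proof -
  interpret cliqueword z K m using cw unfolding z_def .
  define a where "a = z ! \<phi>"
  have phz: "\<phi> < length z" using ph len by simp
  have aK: "a \<in> K" unfolding a_def using phz setz by auto
  have xa: "x \<noteq> a" using aK xK by auto
  have m0: "m > 0" using mpos phz by simp
  define c where "c = int m - 1 - int \<phi>"
  define g where "g = (\<lambda>t. (H t + c) div int m)"
  have Dv_eq: "Dv x a (take t w) = - g t" for t
  proof -
    define k where "k = length (filter (\<lambda>c. c \<in> K) (take t w))"
    have fz: "filter (\<lambda>c. c \<in> K) (take t w) = take k z"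
      unfolding k_def z_def by (rule filter_take_is)
    have kle: "k \<le> length z"
    proof -
      have "length (take k z) = k" using fz k_def by simp
      then show ?thesis by simp
    qed
    have "count_list (take t w) a = count_list (filter (\<lambda>c. c \<in> K) (take t w)) a"
      using aK by (simp add: count_list_filter)
    also have "\<dots> = (k + m - 1 - \<phi>) div m" unfolding fz a_def using count_z[OF ph kle] .
    finally have cnt: "count_list (take t w) a = (k + m - 1 - \<phi>) div m" .
    have ca: "int (count_list (take t w) a) = (int k + c) div int m"
    proof -
      have e: "int k + c = int k + int m - (1 + int \<phi>)" unfolding c_def by simp
      show ?thesis unfolding e cnt using ph by (simp add: zdiv_int of_nat_diff)
    qed
    have "g t = (int k + c + (- int (count_list (take t w) x)) * int m) div int m"
      unfolding g_def H_def k_def by (simp add: algebra_simps)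
    also have "\<dots> = - int (count_list (take t w) x) + (int k + c) div int m"
      by (rule div_mult_self1) (use m0 in simp)
    finally show ?thesis unfolding Dv_def using ca by simp
  qed
  have fin: "finite (H ` {0..length w})" by simp
  have ne: "H ` {0..length w} \<noteq> {}" by simp
  have "hmin \<in> H ` {0..length w}" using Min_in[OF fin ne] unfolding hmin_def .
  then obtain tmin where tmin0: "tmin \<in> {0..length w}" "hmin = H tmin" by (rule imageE) simp
  then have tmin: "tmin \<le> length w" "H tmin = hmin" by auto
  have "hmax \<in> H ` {0..length w}" using Max_in[OF fin ne] unfolding hmax_def .
  then obtain tmax where tmax0: "tmax \<in> {0..length w}" "hmax = H tmax" by (rule imageE) simp
  then have tmax: "tmax \<le> length w" "H tmax = hmax" by auto
  have Hb: "hmin \<le> H t \<and> H t \<le> hmax" if "t \<le> length w" for t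
    unfolding hmin_def hmax_def using that fin by auto
  have gb: "g tmin \<le> g t \<and> g t \<le> g tmax" if "t \<le> length w" for t
    using Hb[OF that] tmin tmax m0 unfolding g_def by (auto intro!: zdiv_mono1)
  have "alternate w x a \<longleftrightarrow> (\<forall>t1\<le>length w. \<forall>t2\<le>length w. \<bar>Dv x a (take t1 w) - Dv x a (take t2 w)\<bar> \<le> 1)"
    by (rule alt_band[OF xa])
  also have "\<dots> \<longleftrightarrow> g tmax - g tmin \<le> 1"
  proof
    assume "\<forall>t1\<le>length w. \<forall>t2\<le>length w. \<bar>Dv x a (take t1 w) - Dv x a (take t2 w)\<bar> \<le> 1"
    then have "\<bar>Dv x a (take tmax w) - Dv x a (take tmin w)\<bar> \<le> 1" using tmin tmax by blast
    then show "g tmax - g tmin \<le> 1" unfolding Dv_eq by simp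
  next
    assume h: "g tmax - g tmin \<le> 1"
    show "\<forall>t1\<le>length w. \<forall>t2\<le>length w. \<bar>Dv x a (take t1 w) - Dv x a (take t2 w)\<bar> \<le> 1"
    proof (intro allI impI)
      fix t1 t2 assume "t1 \<le> length w" "t2 \<le> length w"
      then have "g tmin \<le> g t1 \<and> g t1 \<le> g tmax" "g tmin \<le> g t2 \<and> g t2 \<le> g tmax"
        using gb by auto
      then show "\<bar>Dv x a (take t1 w) - Dv x a (take t2 w)\<bar> \<le> 1"
        unfolding Dv_eq using h by linarith
    qed
  qed
  also have "g tmax - g tmin = (hmin + c + (hmax - hmin)) div int m - (hmin + c) div int m"
    unfolding g_def tmin tmax by (simp add: add.commute)
  also have "\<dots> \<le> 1 \<longleftrightarrow> (hmin + c) mod int m + (hmax - hmin) < 2 * int m"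
    by (rule div_band) (use m0 Hb tmin in auto)
  finally show ?thesis unfolding a_def c_def by (simp add: algebra_simps)
qed




theorem theorem11:
  fixes V :: "'a set" and E :: "'a \<Rightarrow> 'a \<Rightarrow> bool" and I K :: "'a set"
    and m d :: nat and v :: 'a and S :: "'a set"
  assumes "simple_graph V E"
    and "split_partition V E I K"
    and "card K = m"
    and "\<forall>x\<in>I. \<forall>y\<in>I. x \<noteq> y \<longrightarrow> nbhd V E x \<noteq> nbhd V E y"
    and "v \<in> K"
    and "S \<subseteq> I" and "card S \<ge> d + 1"
    and "\<forall>s\<in>S. E v s \<and> degree V E s = d"
    and "d + 2 \<le> m"
  shows "\<not> word_representable V E"
proof
  assume "word_representable V E"
  then obtain w where setw: "set w = V"
    and rep: "\<forall>x\<in>V. \<forall>y\<in>V. x \<noteq> y \<longrightarrow> (alternate w x y \<longleftrightarrow> E x y)"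
    unfolding word_representable_def by blast
  have finV: "finite V" and symE: "\<And>x y. E x y \<Longrightarrow> E y x" and irr: "\<And>x. \<not> E x x"
    and EV: "\<And>x y. E x y \<Longrightarrow> x \<in> V \<and> y \<in> V"
    using assms(1) unfolding simple_graph_def by auto
  have VIK: "V = I \<union> K" and IK: "I \<inter> K = {}" and cl: "\<And>x y. x \<in> K \<Longrightarrow> y \<in> K \<Longrightarrow> x \<noteq> y \<Longrightarrow> E x y"
    and ind: "\<And>x y. x \<in> I \<Longrightarrow> y \<in> I \<Longrightarrow> \<not> E x y"
    using assms(2) unfolding split_partition_def by auto
  have finK: "finite K" using finV VIK by simp
  have finS: "finite S" using finV VIK assms(6) finite_subset by blast
  have m0: "m > 0" using assms(9) by simp
  define z where "z = filter (\<lambda>c. c \<in> K) w"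
  have cw: "cliqueword z K m"
  proof
    show "finite K" by (rule finK)
    show "card K = m" by (rule assms(3))
    show "set z = K" unfolding z_def using setw VIK by auto
    fix a b assume a: "a \<in> K" and b: "b \<in> K" and ab: "a \<noteq> b"
    have "alternate w a b" using rep a b ab cl[OF a b ab] VIK by auto
    moreover have "filter (\<lambda>c. c = a \<or> c = b) z = filter (\<lambda>c. c = a \<or> c = b) w"
    proof -
      have "filter (\<lambda>c. c = a \<or> c = b) z = filter (\<lambda>c. c \<in> K \<and> (c = a \<or> c = b)) w"
        unfolding z_def by (simp add: filter_filter)
      also have "(\<lambda>c. c \<in> K \<and> (c = a \<or> c = b)) = (\<lambda>c. c = a \<or> c = b)" using a b by auto
      finally show ?thesis .
    qed
    ultimately show "alternate z a b" unfolding alternate_def by simp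
  qed
  interpret cliqueword z K m by (rule cw)
  have injz: "inj_on (nth z) {0..<m}"
  proof -
    have "inj_on (nth P) {0..<length P}" using P_distinct by (simp add: inj_on_nth)
    moreover have "\<And>i. i < m \<Longrightarrow> P!i = z!i" unfolding P_def by simp
    ultimately show ?thesis using P_len by (simp add: inj_on_def)
  qed
  have Kz: "K = (nth z) ` {0..<m}"
  proof -
    have "set P = (nth P) ` {0..<length P}" by (metis map_nth set_map set_upt)
    also have "\<dots> = (nth z) ` {0..<m}" using P_len unfolding P_def by (auto simp: image_def)
    finally show ?thesis using P_set by simp
  qed
  define Hf where "Hf = (\<lambda>x t. int (length (filter (\<lambda>c. c \<in> K) (take t w))) - int m * int (count_list (take t w) x))"
  define hmin where "hmin = (\<lambda>x. Min (Hf x ` {0..length w}))"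
  define hmax where "hmax = (\<lambda>x. Max (Hf x ` {0..length w}))"
  define A where "A = (\<lambda>x. hmin x + int m - 1)"
  define l where "l = (\<lambda>x. 2 * int m - (hmax x - hmin x))"
  have nb: "nbhd V E x = (nth z) ` {\<phi> \<in> {0..<m}. (A x - int \<phi>) mod int m < l x}" if xI: "x \<in> I" for x
  proof -
    have xK: "x \<notin> K" using xI IK by auto
    have "nbhd V E x = {a \<in> K. alternate w x a}"
    proof
      show "nbhd V E x \<subseteq> {a \<in> K. alternate w x a}"
      proof
        fix y assume "y \<in> nbhd V E x"
        then have y: "y \<in> V" "E x y" unfolding nbhd_def by auto
        have "y \<notin> I" using ind[OF xI] y(2) by blast
        then have yK: "y \<in> K" using y VIK by auto
        have "x \<noteq> y" using irr y(2) by auto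
        then have "alternate w x y" using rep y EV[OF y(2)] by blast
        then show "y \<in> {a \<in> K. alternate w x a}" using yK by simp
      qed
      show "{a \<in> K. alternate w x a} \<subseteq> nbhd V E x"
      proof
        fix y assume y: "y \<in> {a \<in> K. alternate w x a}"
        then have "x \<noteq> y" using xK by auto
        then have "E x y" using rep y xI VIK by auto
        then show "y \<in> nbhd V E x" unfolding nbhd_def using y VIK by auto
      qed
    qed
    also have "\<dots> = (nth z) ` {\<phi> \<in> {0..<m}. alternate w x (z!\<phi>)}" unfolding Kz by auto
    also have "\<dots> = (nth z) ` {\<phi> \<in> {0..<m}. (A x - int \<phi>) mod int m < l x}"
    proof -
      have "alternate w x (z!\<phi>) \<longleftrightarrow> (A x - int \<phi>) mod int m < l x" if "\<phi> < m" for \<phi>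
        using charN[OF cw[unfolded z_def] xK that] unfolding A_def l_def hmin_def hmax_def Hf_def z_def
        by simp
      then show ?thesis by auto
    qed
    finally show ?thesis .
  qed
  obtain \<phi>v where phv: "\<phi>v < m" "v = z!\<phi>v" using assms(5) Kz by auto
  define \<rho> where "\<rho> = (\<lambda>x. A x mod int m)"
  have main: "nbhd V E x = (nth z) ` {\<phi> \<in> {0..<m}. (\<rho> x - int \<phi>) mod int m < int d}
     \<and> \<rho> x \<in> (\<lambda>i. (int \<phi>v + i) mod int m) ` {0..<int d}" if xS: "x \<in> S" for x
  proof -
    have xI: "x \<in> I" using xS assms(6) by auto
    have deg: "card (nbhd V E x) = d" using assms(8) xS unfolding degree_def by auto
    have vn: "v \<in> nbhd V E x" using assms(8) xS symE assms(5) VIK unfolding nbhd_def by auto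
    have finN: "finite (nbhd V E x)" using finV unfolding nbhd_def by simp
    have d1: "d \<ge> 1" using deg vn finN by (metis One_nat_def Suc_leI card_gt_0_iff empty_iff)
    have "card (nbhd V E x) = card {\<phi> \<in> {0..<m}. (A x - int \<phi>) mod int m < l x}"
      unfolding nb[OF xI] by (rule card_image) (rule inj_on_subset[OF injz], auto)
    also have "\<dots> = card {t \<in> {0..<m}. int t < l x}" by (rule card_mod_set[OF m0])
    finally have cd: "card {t \<in> {0..<m}. int t < l x} = d" using deg by simp
    have ld: "l x = int d"
    proof (cases "l x < int m")
      case True
      have "{t \<in> {0..<m}. int t < l x} = {0..<nat (l x)}" using True by auto
      then have "nat (l x) = d" using cd by simp
      then show ?thesis using d1 by linarith
    next
      case False
      then have "{t \<in> {0..<m}. int t < l x} = {0..<m}" by auto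
      then show ?thesis using cd assms(9) by simp
    qed
    have eqr: "(A x - int \<phi>) mod int m = (\<rho> x - int \<phi>) mod int m" for \<phi>
      unfolding \<rho>_def by (simp add: mod_diff_left_eq)
    have n1: "nbhd V E x = (nth z) ` {\<phi> \<in> {0..<m}. (\<rho> x - int \<phi>) mod int m < int d}"
      using nb[OF xI] ld eqr by simp
    then obtain \<phi> where ph: "\<phi> < m" "(\<rho> x - int \<phi>) mod int m < int d" "v = z!\<phi>"
      using vn by auto
    have "\<phi> = \<phi>v" using injz ph phv unfolding inj_on_def by auto
    define i where "i = (\<rho> x - int \<phi>v) mod int m"
    have i: "i \<in> {0..<int d}" unfolding i_def using ph \<open>\<phi> = \<phi>v\<close> m0 by simp
    have "(int \<phi>v + i) mod int m = (int \<phi>v + (\<rho> x - int \<phi>v)) mod int m"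
      unfolding i_def by (simp add: mod_add_right_eq)
    also have "\<dots> = \<rho> x" unfolding \<rho>_def by simp
    finally have "\<rho> x \<in> (\<lambda>i. (int \<phi>v + i) mod int m) ` {0..<int d}" using i by (auto intro!: image_eqI[of _ _ i])
    then show ?thesis using n1 by simp
  qed
  have inj: "inj_on \<rho> S"
  proof
    fix x y assume x: "x \<in> S" and y: "y \<in> S" and e: "\<rho> x = \<rho> y"
    have "nbhd V E x = nbhd V E y" using main[OF x] main[OF y] e by simp
    then show "x = y" using assms(4) x y assms(6) by blast
  qed
  have "card S \<le> card ((\<lambda>i. (int \<phi>v + i) mod int m) ` {0..<int d})"
    by (rule card_inj_on_le[OF inj]) (use main in auto)
  also have "\<dots> \<le> card {0..<int d}" by (rule card_image_le) simp
  also have "\<dots> = d" by simp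
  finally show False using assms(7) by simp
qed


end
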